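(* Let $K$ be the fractal percolation on $[0,1]$ with parameters $M\in\mathbb{N}_{\geq2}$ and $p\in(0,1]$, $D=\log(Mp)/\log M$, $r=1/M$, and $\overline{\mathcal V}_k(K):=\lim_{n\to\infty}r^{n(D-k)}\mathbb{E}V_k(K_n)$ for $k=0,1$. Then these limits exist and $$\overline{\mathcal V}_1(K)=1,\qquad \overline{\mathcal V}_0(K)=\frac{M(1-p)}{M-p}.$$
   Context: Fractal percolation on $[0,1]$: $K_0=[0,1]$; given $K_{n-1}$, a union of closed grid intervals of length $M^{-(n-1)}$, each is divided into $M$ closed subintervals of length $M^{-n}$, each kept independently (of everything else) with probability $p$; $K_n$ is the union of kept subintervals. $V_1$ is length and $V_0$ the number of connected components. *)

theory Defs
  imports "HOL-Analysis.Analysis" "HOL-Probability.Probability"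
begin

text \<open>Each nonempty word carries an independent Bernoulli(p) coin (omega ds); the
  interval of word ds is kept in K_n iff the coins of all its nonempty prefixes are True.\<close>

definition fp_words :: "nat \<Rightarrow> nat \<Rightarrow> nat list set" where
  "fp_words M n = {ds. length ds = n \<and> set ds \<subseteq> {..<M}}"

definition fp_left :: "nat \<Rightarrow> nat list \<Rightarrow> real" where
  "fp_left M ds = (\<Sum>i<length ds. real (ds ! i) / real M ^ Suc i)"

definition fp_cell :: "nat \<Rightarrow> nat list \<Rightarrow> real set" where
  "fp_cell M ds = {fp_left M ds .. fp_left M ds + 1 / real M ^ length ds}"

definition fp_kept :: "(nat list \<Rightarrow> bool) \<Rightarrow> nat list \<Rightarrow> bool" where
  "fp_kept \<omega> ds = (\<forall>k\<in>{1..length ds}. \<omega> (take k ds))"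

definition fp_K :: "nat \<Rightarrow> (nat list \<Rightarrow> bool) \<Rightarrow> nat \<Rightarrow> real set" where
  "fp_K M \<omega> n = \<Union> {fp_cell M ds | ds. ds \<in> fp_words M n \<and> fp_kept \<omega> ds}"

definition fp_space :: "real \<Rightarrow> (nat list \<Rightarrow> bool) measure" where
  "fp_space p = (\<Pi>\<^sub>M ds\<in>(UNIV :: nat list set). measure_pmf (bernoulli_pmf p))"

definition V1 :: "real set \<Rightarrow> real" where
  "V1 S = measure lborel S"

definition V0 :: "real set \<Rightarrow> real" where
  "V0 S = real (card (components S))"

end

theory Submission
  imports Defs
begin

definition ev :: "nat list set \<Rightarrow> (nat list \<Rightarrow> bool) \<Rightarrow> real" where
  "ev S \<omega> = (if \<forall>s\<in>S. \<omega> s then 1 else 0)"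

lemma ev_prod: "finite S \<Longrightarrow> ev S \<omega> = (\<Prod>s\<in>S. if \<omega> s then 1 else 0)"
  unfolding ev_def by (induction S rule: finite_induct) auto

lemma ev_meas: "finite S \<Longrightarrow> ev S \<in> borel_measurable (fp_space p)"
proof -
  assume "finite S"
  have m: "(\<lambda>\<omega>::nat list \<Rightarrow> bool. \<omega> s) \<in> measurable (fp_space p) (count_space UNIV)" for s
  proof -
    have "(\<lambda>\<omega>::nat list \<Rightarrow> bool. \<omega> s) \<in> measurable (fp_space p) (measure_pmf (bernoulli_pmf p))"
      unfolding fp_space_def by (rule measurable_component_singleton) simp
    then show ?thesis by (simp add: measurable_def)
  qed
  have "(\<lambda>\<omega>. \<Prod>s\<in>S. if \<omega> s then 1 else 0::real) \<in> borel_measurable (fp_space p)"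
    apply (intro borel_measurable_prod measurable_If)
    using m by (auto simp: pred_def)
  moreover have "ev S = (\<lambda>\<omega>. \<Prod>s\<in>S. if \<omega> s then 1 else 0::real)"
    using ev_prod[OF \<open>finite S\<close>] by (intro ext) simp
  ultimately show ?thesis by simp
qed

lemma ev_integral:
  assumes "finite S" "0 \<le> p" "p \<le> 1"
  shows "(\<integral>\<omega>. ev S \<omega> \<partial>fp_space p) = p ^ card S"
proof -
  let ?M = "\<lambda>_::nat list. measure_pmf (bernoulli_pmf p)"
  let ?E = "prod_emb UNIV ?M S (\<Pi>\<^sub>E s\<in>S. {True})"
  have sp: "space (fp_space p) = UNIV"
    by (auto simp: fp_space_def space_PiM)
  have E: "?E \<in> sets (fp_space p)"
    unfolding fp_space_def by (intro measurable_prod_emb sets_PiM_I_finite assms) auto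
  have eq: "ev S \<omega> = indicator ?E \<omega>" for \<omega>
  proof -
    have "\<omega> \<in> ?E \<longleftrightarrow> (\<forall>s\<in>S. \<omega> s)"
      by (simp add: prod_emb_iff space_PiM PiE_iff restrict_def fun_eq_iff) (metis (full_types))
    then show ?thesis by (simp add: ev_def indicator_def)
  qed
  have "emeasure (fp_space p) ?E = (\<Prod>s\<in>S. emeasure (?M s) {True})"
    unfolding fp_space_def
    by (rule emeasure_PiM_emb) (auto simp: assms prob_space_measure_pmf)
  also have "\<dots> = ennreal (p ^ card S)"
    using assms by (simp add: emeasure_pmf_single prod_ennreal[symmetric] ennreal_power)
  finally have em: "emeasure (fp_space p) ?E = ennreal (p ^ card S)" .
  have "(\<integral>\<omega>. ev S \<omega> \<partial>fp_space p) = (\<integral>\<omega>. indicator ?E \<omega> \<partial>fp_space p)"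
    by (simp add: eq)
  also have "\<dots> = measure (fp_space p) ?E"
    using E sets.sets_into_space[OF E] by (simp add: Int_absorb2)
  also have "\<dots> = p ^ card S" using em assms by (simp add: measure_def)
  finally show ?thesis .
qed

lemma ev_integrable: "finite S \<Longrightarrow> integrable (fp_space p) (ev S)"
proof -
  assume "finite S"
  have "prob_space (fp_space p)" unfolding fp_space_def
    by (intro prob_space_PiM prob_space_measure_pmf)
  then interpret prob_space "fp_space p" .
  show ?thesis
    by (rule integrable_const_bound[where B=1]) (auto simp: ev_def ev_meas \<open>finite S\<close>)
qed

lemma components_unique_closed:
  fixes S :: "real set"
  assumes F: "finite F" and cl: "\<And>C. C\<in>F \<Longrightarrow> closed C" and co: "\<And>C. C\<in>F \<Longrightarrow> connected C"
    and ne: "\<And>C. C\<in>F \<Longrightarrow> C \<noteq> {}" and pw: "pairwise disjnt F" and S: "S = \<Union>F"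
  shows "components S = F"
proof -
  have key: "K \<subseteq> C" if K: "connected K" "K \<subseteq> S" and C: "C \<in> F" "K \<inter> C \<noteq> {}" for K C
  proof -
    have clB: "closed (\<Union>(F - {C}))" using F cl by (intro closed_Union) auto
    have dis: "C \<inter> \<Union>(F - {C}) \<inter> K = {}" using pw C(1)
      by (auto simp: pairwise_def disjnt_def)
    have sub: "K \<subseteq> C \<union> \<Union>(F - {C})" using K(2) S by auto
    from connected_closedD[OF K(1) dis sub cl[OF C(1)] clB]
    have "C \<inter> K = {} \<or> \<Union>(F - {C}) \<inter> K = {}" .
    then have "\<Union>(F - {C}) \<inter> K = {}" using C(2) by blast
    then show ?thesis using sub by blast
  qed
  show ?thesis
  proof
    show "components S \<subseteq> F"
    proof
      fix K assume K: "K \<in> components S"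
      then obtain x where x: "x \<in> K" using in_components_nonempty by blast
      then have "x \<in> S" using in_components_subset[OF K] by blast
      then obtain C where C: "C \<in> F" "x \<in> C" using S by blast
      have "K \<subseteq> C" using key[OF in_components_connected[OF K] in_components_subset[OF K] C(1)] x C(2) by blast
      moreover have "C \<subseteq> K"
        using components_maximal[OF K co[OF C(1)]] S C x by blast
      ultimately show "K \<in> F" using C by auto
    qed
  next
    show "F \<subseteq> components S"
    proof
      fix C assume C: "C \<in> F"
      have "C \<subseteq> S" using S C by blast
      then obtain K where K: "K \<in> components S" "C \<subseteq> K"
        using exists_component_superset[OF _ _ co[OF C]] ne[OF C] by blast
      have "K \<subseteq> C" using key[OF in_components_connected[OF K(1)] in_components_subset[OF K(1)] C] K(2) ne[OF C]
        by blast
      then show "C \<in> components S" using K by auto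
    qed
  qed
qed

definition cell :: "real \<Rightarrow> nat \<Rightarrow> real set" where
  "cell h i = {real i * h .. real (Suc i) * h}"

definition UU :: "real \<Rightarrow> nat set \<Rightarrow> nat \<Rightarrow> real set" where
  "UU h A N = \<Union> (cell h ` {i. i \<in> A \<and> i < N})"

definition ind :: "nat set \<Rightarrow> nat \<Rightarrow> real" where
  "ind A i = (if i \<in> A then 1 else 0)"

lemma UU_Suc: "UU h A (Suc N) = (if N \<in> A then UU h A N \<union> cell h N else UU h A N)"
  unfolding UU_def by (auto simp: less_Suc_eq)

lemma UU_closed: "closed (UU h A N)"
  unfolding UU_def cell_def by (intro closed_Union) auto

lemma UU_sub: "h > 0 \<Longrightarrow> x \<in> UU h A N \<Longrightarrow> x \<le> real N * h"
proof -
  assume h: "h > 0" and x: "x \<in> UU h A N"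
  then obtain i where i: "i < N" "x \<le> real (Suc i) * h" unfolding UU_def cell_def by auto
  have "real (Suc i) * h \<le> real N * h" using i(1) h by (intro mult_right_mono) auto
  then show ?thesis using i by linarith
qed

lemma UU_disj: "h > 0 \<Longrightarrow> (N = 0 \<or> N - 1 \<notin> A) \<Longrightarrow> UU h A N \<inter> cell h N = {}"
proof -
  assume h: "h > 0" and N: "N = 0 \<or> N - 1 \<notin> A"
  { fix x i assume i: "i \<in> A" "i < N" and x: "x \<in> cell h i" "x \<in> cell h N"
    have "Suc i < N" using i N by (cases "Suc i = N") auto
    then have "real (Suc i) * h < real N * h" using h by simp
    then have False using x by (auto simp: cell_def) }
  then show ?thesis unfolding UU_def by blast
qed

lemma UU_touch: "h > 0 \<Longrightarrow> N \<ge> 1 \<Longrightarrow> N - 1 \<in> A \<Longrightarrow> real N * h \<in> UU h A N \<and> UU h A N \<inter> cell h N \<subseteq> {real N * h}"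
proof -
  assume h: "h > 0" and N: "N \<ge> 1" "N - 1 \<in> A"
  have "real N * h \<in> cell h (N - 1)" using N h by (auto simp: cell_def of_nat_diff)
  then have "real N * h \<in> UU h A N" using N unfolding UU_def by force
  moreover have "UU h A N \<inter> cell h N \<subseteq> {real N * h}"
  proof
    fix x assume "x \<in> UU h A N \<inter> cell h N"
    then have "x \<le> real N * h" "real N * h \<le> x" using UU_sub[OF h, of x A N] by (auto simp: cell_def)
    then show "x \<in> {real N * h}" by simp
  qed
  ultimately show ?thesis by blast
qed

lemma comp_count:
  assumes h: "h > 0"
  shows "finite (components (UU h A N)) \<and> real (card (components (UU h A N))) =
    (\<Sum>i<N. ind A i - (if i = 0 then 0 else ind A (i - 1) * ind A i))"
proof (induction N)
  case 0
  then show ?case by (simp add: UU_def)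
next
  case (Suc N)
  let ?U = "UU h A N" and ?T = "cell h N"
  have Tc: "closed ?T" "connected ?T" "?T \<noteq> {}" using h
    by (auto simp: cell_def)
  have fin: "finite (components ?U)" using Suc.IH by blast
  have ccl: "\<And>C. C \<in> components ?U \<Longrightarrow> closed C"
    using closed_components UU_closed by blast
  show ?case
  proof (cases "N \<in> A")
    case False
    then show ?thesis using Suc.IH by (simp add: UU_Suc ind_def)
  next
    case NA: True
    show ?thesis
    proof (cases "N = 0 \<or> N - 1 \<notin> A")
      case True
      have dis: "?U \<inter> ?T = {}" using UU_disj[OF h True] .
      have eq: "components (?U \<union> ?T) = insert ?T (components ?U)"
      proof (rule components_unique_closed)
        show "pairwise disjnt (insert ?T (components ?U))"
          using dis pairwise_disjoint_components[of ?U] in_components_subset[of _ ?U]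
          unfolding pairwise_def disjnt_def by blast
        show "finite (insert ?T (components ?U))" using fin by simp
        show "closed C'" if "C' \<in> insert ?T (components ?U)" for C' using that Tc ccl by auto
        show "connected C'" if "C' \<in> insert ?T (components ?U)" for C' using that Tc in_components_connected by auto
        show "C' \<noteq> {}" if "C' \<in> insert ?T (components ?U)" for C' using that Tc in_components_nonempty by auto
        show "?U \<union> ?T = \<Union> (insert ?T (components ?U))" by auto
      qed
      have notin: "?T \<notin> components ?U"
        using dis Tc(3) in_components_subset by blast
      show ?thesis using Suc.IH NA True eq notin fin
        by (auto simp: UU_Suc ind_def)
    next
      case False
      then have N1: "N \<ge> 1" "N - 1 \<in> A" by auto
      note t = UU_touch[OF h N1]
      define C where "C = connected_component_set ?U (real N * h)"
      have C: "C \<in> components ?U" "real N * h \<in> C"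
        using t componentsI C_def by (auto simp: connected_component_refl)
      have NT: "real N * h \<in> ?T" using h by (auto simp: cell_def)
      have eq: "components (?U \<union> ?T) = insert (C \<union> ?T) (components ?U - {C})"
      proof (rule components_unique_closed)
        show "pairwise disjnt (insert (C \<union> ?T) (components ?U - {C}))"
        proof -
          have a: "C' \<inter> (C \<union> ?T) = {}" if "C' \<in> components ?U" "C' \<noteq> C" for C'
          proof -
            have "C' \<inter> C = {}" using that C(1) components_nonoverlap by blast
            moreover have "C' \<inter> ?T \<subseteq> {real N * h}" using t in_components_subset[OF that(1)] by blast
            ultimately show ?thesis using C(2) by blast
          qed
          show ?thesis using a pairwise_disjoint_components[of ?U]
            unfolding pairwise_def disjnt_def by (metis Diff_iff Int_commute insert_iff)
        qed
        show "connected C'" if "C' \<in> insert (C \<union> ?T) (components ?U - {C})" for C'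
          using that in_components_connected C Tc NT
          by (auto intro!: connected_Un)
        show "closed C'" if "C' \<in> insert (C \<union> ?T) (components ?U - {C})" for C'
          using that ccl C Tc by auto
        show "?U \<union> ?T = \<Union> (insert (C \<union> ?T) (components ?U - {C}))"
          using C(1) Union_components[of ?U] by blast
        show "finite (insert (C \<union> ?T) (components ?U - {C}))" using fin by simp
        show "C' \<noteq> {}" if "C' \<in> insert (C \<union> ?T) (components ?U - {C})" for C'
          using that Tc in_components_nonempty by auto
      qed
      have notin: "C \<union> ?T \<notin> components ?U - {C}"
      proof
        assume "C \<union> ?T \<in> components ?U - {C}"
        then obtain C' where "C' \<in> components ?U" "C' \<noteq> C" "C \<subseteq> C'" by blast
        then show False using C components_nonoverlap by blast
      qed
      have "card (components (?U \<union> ?T)) = card (components ?U)"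
        using eq notin fin C(1) by (simp add: card_Diff_singleton) (metis Suc_pred card_gt_0_iff empty_iff)
      then show ?thesis using Suc.IH NA N1 eq fin
        by (auto simp: UU_Suc ind_def)
    qed
  qed
qed

lemma UU_compact: "compact (UU h A N)"
  unfolding UU_def cell_def by (intro compact_Union) auto

lemma len_count:
  assumes h: "h > 0"
  shows "measure lborel (UU h A N) = h * (\<Sum>i<N. ind A i)"
proof (induction N)
  case 0
  then show ?case by (simp add: UU_def)
next
  case (Suc N)
  let ?U = "UU h A N" and ?T = "cell h N"
  show ?case
  proof (cases "N \<in> A")
    case False
    then show ?thesis using Suc.IH by (simp add: UU_Suc ind_def)
  next
    case NA: True
    have I: "?U \<inter> ?T \<subseteq> {real N * h}"
    proof (cases "N = 0 \<or> N - 1 \<notin> A")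
      case True then show ?thesis using UU_disj[OF h True] by simp
    next
      case False then show ?thesis using UU_touch[OF h] by auto
    qed
    have "AE x in lborel. x \<notin> ?U \<or> x \<notin> ?T"
      by (rule AE_I'[OF finite_imp_null_set_lborel[of "{real N * h}"]]) (use I in auto)
    then have "measure lborel (?U \<union> ?T) = measure lborel ?U + measure lborel ?T"
      by (rule measure_Un_AE) (auto intro!: fmeasurable_compact UU_compact simp: cell_def)
    moreover have "measure lborel ?T = h" using h by (simp add: cell_def algebra_simps)
    ultimately show ?thesis using Suc.IH NA by (simp add: UU_Suc ind_def algebra_simps)
  qed
qed

fun idx :: "nat \<Rightarrow> nat list \<Rightarrow> nat" where
  "idx M [] = 0"
| "idx M (d # ds) = d * M ^ length ds + idx M ds"

fun digs :: "nat \<Rightarrow> nat \<Rightarrow> nat \<Rightarrow> nat list" where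
  "digs M 0 i = []"
| "digs M (Suc n) i = (i div M ^ n) # digs M n (i mod M ^ n)"

lemma length_digs[simp]: "length (digs M n i) = n"
  by (induction n arbitrary: i) auto

lemma digs_set: "M > 0 \<Longrightarrow> i < M ^ n \<Longrightarrow> set (digs M n i) \<subseteq> {..<M}"
proof (induction n arbitrary: i)
  case 0 then show ?case by simp
next
  case (Suc n)
  have "i div M ^ n < M" using Suc.prems by (simp add: less_mult_imp_div_less mult.commute)
  moreover have "i mod M ^ n < M ^ n" using Suc.prems by simp
  ultimately show ?case using Suc by simp
qed

lemma idx_less: "set ds \<subseteq> {..<M} \<Longrightarrow> idx M ds < M ^ length ds"
proof (induction ds)
  case Nil then show ?case by simp
next
  case (Cons d ds)
  have "d * M ^ length ds + idx M ds < (d + 1) * M ^ length ds" using Cons by simp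
  also have "\<dots> \<le> M * M ^ length ds" using Cons.prems by (intro mult_right_mono) auto
  finally show ?case by simp
qed

lemma digs_idx: "set ds \<subseteq> {..<M} \<Longrightarrow> digs M (length ds) (idx M ds) = ds"
proof (induction ds)
  case Nil then show ?case by simp
next
  case (Cons d ds)
  have l: "idx M ds < M ^ length ds" using idx_less Cons.prems by simp
  have K: "M ^ length ds \<noteq> 0" using Cons.prems by auto
  have "(idx M ds + d * M ^ length ds) div M ^ length ds = d + idx M ds div M ^ length ds"
    using div_mult_self1[OF K] by blast
  then have "(d * M ^ length ds + idx M ds) div M ^ length ds = d" using l by (simp add: add.commute)
  moreover have "(d * M ^ length ds + idx M ds) mod M ^ length ds = idx M ds" using l by simp
  ultimately show ?case using Cons by simp
qed


lemma idx_digs: "M > 0 \<Longrightarrow> i < M ^ n \<Longrightarrow> idx M (digs M n i) = i"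
proof (induction n arbitrary: i)
  case 0 then show ?case by simp
next
  case (Suc n)
  have "idx M (digs M (Suc n) i) = i div M ^ n * M ^ n + i mod M ^ n"
    using Suc by simp
  then show ?case by (simp add: div_mult_mod_eq)
qed

lemma fp_left_Cons: "M > 0 \<Longrightarrow> fp_left M (d # ds) = real d / real M + fp_left M ds / real M"
  unfolding fp_left_def
  by (simp add: sum.lessThan_Suc_shift sum_divide_distrib field_simps del: sum.lessThan_Suc)

lemma fp_left_idx: "M > 0 \<Longrightarrow> fp_left M ds = real (idx M ds) / real M ^ length ds"
proof (induction ds)
  case Nil then show ?case by (simp add: fp_left_def)
next
  case (Cons d ds)
  then show ?case by (simp add: fp_left_Cons field_simps)
qed

definition pref :: "nat list \<Rightarrow> nat list set" where
  "pref ds = (\<lambda>k. take k ds) ` {1..length ds}"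

lemma kept_pref: "fp_kept \<omega> ds \<longleftrightarrow> (\<forall>s\<in>pref ds. \<omega> s)"
  unfolding fp_kept_def pref_def by auto

lemma card_pref: "card (pref ds) = length ds"
proof -
  have "inj_on (\<lambda>k. take k ds) {1..length ds}"
    by (rule inj_onI) (metis atLeastAtMost_iff length_take min.absorb2)
  then show ?thesis unfolding pref_def by (simp add: card_image)
qed

lemma finite_pref: "finite (pref ds)" unfolding pref_def by simp

lemma pref_Cons: "pref (d # ds) = insert [d] (Cons d ` pref ds)"
proof -
  have "{1..Suc (length ds)} = insert 1 (Suc ` {1..length ds})"
    by (auto simp: image_iff)
  note I = this
  have "pref (d # ds) = insert (take 1 (d # ds)) ((\<lambda>k. take (Suc k) (d # ds)) ` {1..length ds})"
    unfolding pref_def length_Cons I image_insert image_image by (rule refl)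
  also have "\<dots> = insert [d] (Cons d ` pref ds)"
    unfolding pref_def take_Suc_Cons image_image by simp
  finally show ?thesis .
qed

lemma pref_hd: "s \<in> pref (d # ds) \<Longrightarrow> s \<noteq> [] \<and> hd s = d"
  unfolding pref_def by (auto simp: take_Cons')

lemma pref_ne: "s \<in> pref ds \<Longrightarrow> s \<noteq> []"
  unfolding pref_def by auto

definition PP :: "nat \<Rightarrow> nat \<Rightarrow> nat \<Rightarrow> nat list set" where
  "PP M n i = pref (digs M n i)"

definition G :: "nat \<Rightarrow> real \<Rightarrow> nat \<Rightarrow> real" where
  "G M p n = (\<Sum>i<M ^ n. if i = 0 then 0 else p ^ card (PP M n (i - 1) \<union> PP M n i))"

lemma sum_split: "(\<Sum>i<(M::nat) * K. f i) = (\<Sum>j<M. \<Sum>r<K. f (j * K + r))"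
proof (induction M)
  case 0 then show ?case by simp
next
  case (Suc M)
  have "(\<Sum>i<Suc M * K. f i) = (\<Sum>i<M * K. f i) + (\<Sum>i\<in>{M * K..<M * K + K}. f i)"
  proof -
    have "(\<Sum>i<Suc M * K. f i) = (\<Sum>i\<in>{0..<M * K + K}. f i)" by (simp add: lessThan_atLeast0 add.commute)
    also have "\<dots> = (\<Sum>i\<in>{0..<M * K}. f i) + (\<Sum>i\<in>{M * K..<M * K + K}. f i)"
      by (rule sum.atLeastLessThan_concat[symmetric]) auto
    finally show ?thesis by (simp add: lessThan_atLeast0)
  qed
  also have "(\<Sum>i\<in>{M * K..<M * K + K}. f i) = (\<Sum>r<K. f (M * K + r))"
  proof -
    have "(\<Sum>i\<in>{0 + M * K..<K + M * K}. f i) = (\<Sum>r\<in>{0..<K}. f (r + M * K))"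
      by (rule sum.shift_bounds_nat_ivl)
    then show ?thesis by (simp add: lessThan_atLeast0 add.commute)
  qed
  finally show ?case using Suc by simp
qed

lemma digs_split: "M > 0 \<Longrightarrow> r < M ^ n \<Longrightarrow> digs M (Suc n) (j * M ^ n + r) = j # digs M n r"
  by simp

lemma card_PP: "card (PP M n i) = n"
  by (simp add: PP_def card_pref)

lemma cc_same:
  assumes M: "M > 0" and r: "r < M ^ n" "r \<ge> 1"
  shows "card (PP M (Suc n) (j * M ^ n + r - 1) \<union> PP M (Suc n) (j * M ^ n + r))
       = Suc (card (PP M n (r - 1) \<union> PP M n r))"
proof -
  have e: "j * M ^ n + r - 1 = j * M ^ n + (r - 1)" using r by simp
  have r1: "r - 1 < M ^ n" using r by simp
  let ?X = "PP M n (r - 1) \<union> PP M n r"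
  have "PP M (Suc n) (j * M ^ n + r - 1) \<union> PP M (Suc n) (j * M ^ n + r) = insert [j] (Cons j ` ?X)"
    unfolding e PP_def digs_split[OF M r(1)] digs_split[OF M r1] pref_Cons by auto
  moreover have "[j] \<notin> Cons j ` ?X" using pref_ne unfolding PP_def by auto
  moreover have "finite ?X" by (simp add: PP_def finite_pref)
  ultimately show ?thesis by (simp add: card_image)
qed

lemma cc_diff:
  assumes M: "M > 0" and j: "j \<ge> 1"
  shows "card (PP M (Suc n) (j * M ^ n - 1) \<union> PP M (Suc n) (j * M ^ n)) = 2 * Suc n"
proof -
  have K: "M ^ n > 0" using M by simp
  have e: "j * M ^ n - 1 = (j - 1) * M ^ n + (M ^ n - 1)"
    using j K by (cases j) (auto simp: algebra_simps)
  have a: "PP M (Suc n) (j * M ^ n - 1) = pref ((j - 1) # digs M n (M ^ n - 1))"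
    unfolding PP_def e using digs_split[OF M, of "M ^ n - 1" n "j - 1"] K by simp
  have b: "PP M (Suc n) (j * M ^ n) = pref (j # digs M n 0)"
    unfolding PP_def using digs_split[OF M, of 0 n j] K by simp
  have d: "PP M (Suc n) (j * M ^ n - 1) \<inter> PP M (Suc n) (j * M ^ n) = {}"
  proof -
    have "s \<notin> pref (j # digs M n 0)" if "s \<in> pref ((j - 1) # digs M n (M ^ n - 1))" for s
      using pref_hd[OF that] pref_hd[of s j "digs M n 0"] j by fastforce
    then show ?thesis unfolding a b by blast
  qed
  have fin: "finite (PP M k i)" for k i by (simp add: PP_def finite_pref)
  show ?thesis using card_Un_disjoint[OF fin fin d] by (simp add: card_PP)
qed

lemma G_rec:
  assumes M: "M > 0"
  shows "G M p (Suc n) = real M * p * G M p n + (real M - 1) * p ^ (2 * Suc n)"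
proof -
  let ?K = "M ^ n"
  let ?f = "\<lambda>i. if i = 0 then 0 else p ^ card (PP M (Suc n) (i - 1) \<union> PP M (Suc n) i)"
  have inner: "(\<Sum>r<?K. ?f (j * ?K + r)) = (if j = 0 then 0 else p ^ (2 * Suc n)) + p * G M p n" for j
  proof -
    have "(\<Sum>r<?K. ?f (j * ?K + r)) = (\<Sum>r<?K. (if r = 0 then (if j = 0 then 0 else p ^ (2 * Suc n)) else 0)
         + p * (if r = 0 then 0 else p ^ card (PP M n (r - 1) \<union> PP M n r)))"
    proof (rule sum.cong)
      fix r assume "r \<in> {..<?K}"
      then have r: "r < ?K" by simp
      show "?f (j * ?K + r) = (if r = 0 then (if j = 0 then 0 else p ^ (2 * Suc n)) else 0)
         + p * (if r = 0 then 0 else p ^ card (PP M n (r - 1) \<union> PP M n r))"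
      proof (cases "r = 0")
        case True
        show ?thesis
        proof (cases "j = 0")
          case True then show ?thesis using \<open>r = 0\<close> by simp
        next
          case False
          then have "j * ?K \<noteq> 0" using M by simp
          have e: "?f (j * ?K + r) = p ^ card (PP M (Suc n) (j * ?K - 1) \<union> PP M (Suc n) (j * ?K))"
            using \<open>j * ?K \<noteq> 0\<close> \<open>r = 0\<close> M by simp
          have j1: "j \<ge> 1" using False by simp
          show ?thesis by (simp only: e cc_diff[OF M j1, of n]) (simp add: False \<open>r = 0\<close>)
        qed
      next
        case False
        have r1: "r \<ge> 1" using False by simp
        have e: "?f (j * ?K + r) = p ^ card (PP M (Suc n) (j * ?K + r - 1) \<union> PP M (Suc n) (j * ?K + r))"
          using False by simp
        show ?thesis by (simp only: e cc_same[OF M r r1, of j] power_Suc) (simp add: False)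
      qed
    qed simp
    also have "\<dots> = (if j = 0 then 0 else p ^ (2 * Suc n)) + p * G M p n"
    proof -
      have s1: "(\<Sum>r<?K. (if r = 0 then (if j = 0 then 0 else p ^ (2 * Suc n)) else 0)) = (if j = 0 then 0 else p ^ (2 * Suc n))"
        using M by simp
      have s2: "(\<Sum>r<?K. p * (if r = 0 then 0 else p ^ card (PP M n (r - 1) \<union> PP M n r))) = p * G M p n"
        by (simp only: G_def sum_distrib_left)
      show ?thesis by (simp only: sum.distrib s1 s2)
    qed
    finally show ?thesis .
  qed
  have "G M p (Suc n) = (\<Sum>i<M * ?K. ?f i)" by (simp only: G_def power_Suc)
  also have "\<dots> = (\<Sum>j<M. \<Sum>r<?K. ?f (j * ?K + r))" by (rule sum_split)
  also have "\<dots> = (\<Sum>j<M. (if j = 0 then 0 else p ^ (2 * Suc n)) + p * G M p n)"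
    by (intro sum.cong refl) (rule inner)
  also have "\<dots> = (\<Sum>j<M. (if j = 0 then 0 else p ^ (2 * Suc n))) + real M * (p * G M p n)"
    by (simp only: sum.distrib sum_constant card_lessThan mult.assoc)
  also have "(\<Sum>j<M. (if j = 0 then 0 else p ^ (2 * Suc n))) = (real M - 1) * p ^ (2 * Suc n)"
  proof -
    obtain m where m: "M = Suc m" using M by (cases M) auto
    have "(\<Sum>j<Suc m. (if j = 0 then 0 else c)) = real m * c" for c :: real
      by (induction m) (auto simp: algebra_simps)
    then show ?thesis by (simp add: m)
  qed
  finally have "G M p (Suc n) = (real M - 1) * p ^ (2 * Suc n) + real M * (p * G M p n)" .
  then show ?thesis by (simp only: mult.assoc add.commute)
qed

lemma G_closed:
  assumes M: "M > 0"
  shows "G M p n = (real M * p) ^ n * (real M - 1) * (\<Sum>j<n. (p / real M) ^ Suc j)"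
proof (induction n)
  case 0 then show ?case by (simp add: G_def)
next
  case (Suc n)
  have k: "(real M * p) * (p / real M) = p ^ 2" using M by (simp add: power2_eq_square)
  have key: "(real M * p) ^ Suc n * (p / real M) ^ Suc n = p ^ (2 * Suc n)"
    by (simp only: power_mult_distrib[symmetric] k power_mult)
  have "G M p (Suc n) = real M * p * ((real M * p) ^ n * (real M - 1) * (\<Sum>j<n. (p / real M) ^ Suc j))
     + (real M - 1) * ((real M * p) ^ Suc n * (p / real M) ^ Suc n)"
    by (simp only: G_rec[OF M] Suc.IH key)
  also have "\<dots> = (real M * p) ^ Suc n * (real M - 1) * (\<Sum>j<Suc n. (p / real M) ^ Suc j)"
    by (simp only: sum.lessThan_Suc power_Suc) (simp add: algebra_simps)
  finally show ?case .
qed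

lemma fpK_UU:
  assumes M: "M > 0"
  shows "fp_K M \<omega> n = UU (1 / real M ^ n) {i. i < M ^ n \<and> fp_kept \<omega> (digs M n i)} (M ^ n)"
proof -
  let ?h = "1 / real M ^ n"
  have cellq: "fp_cell M (digs M n i) = cell ?h i" if "i < M ^ n" for i
    using that M by (simp add: fp_cell_def cell_def fp_left_idx idx_digs field_simps)
  have "{fp_cell M ds | ds. ds \<in> fp_words M n \<and> fp_kept \<omega> ds}
      = (\<lambda>i. fp_cell M (digs M n i)) ` {i. i < M ^ n \<and> fp_kept \<omega> (digs M n i)}"
  proof (intro equalityI subsetI)
    fix X assume "X \<in> {fp_cell M ds | ds. ds \<in> fp_words M n \<and> fp_kept \<omega> ds}"
    then obtain ds where ds: "X = fp_cell M ds" "length ds = n" "set ds \<subseteq> {..<M}" "fp_kept \<omega> ds"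
      by (auto simp: fp_words_def)
    have "digs M n (idx M ds) = ds" using digs_idx[OF ds(3)] ds(2) by simp
    moreover have "idx M ds < M ^ n" using idx_less[OF ds(3)] ds(2) by simp
    ultimately show "X \<in> (\<lambda>i. fp_cell M (digs M n i)) ` {i. i < M ^ n \<and> fp_kept \<omega> (digs M n i)}"
      using ds by (metis (mono_tags, lifting) image_eqI mem_Collect_eq)
  next
    fix X assume "X \<in> (\<lambda>i. fp_cell M (digs M n i)) ` {i. i < M ^ n \<and> fp_kept \<omega> (digs M n i)}"
    then obtain i where i: "X = fp_cell M (digs M n i)" "i < M ^ n" "fp_kept \<omega> (digs M n i)" by auto
    have "digs M n i \<in> fp_words M n" using digs_set[OF M i(2)] by (simp add: fp_words_def)
    then show "X \<in> {fp_cell M ds | ds. ds \<in> fp_words M n \<and> fp_kept \<omega> ds}" using i by blast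
  qed
  also have "\<dots> = cell ?h ` {i. i \<in> {i. i < M ^ n \<and> fp_kept \<omega> (digs M n i)} \<and> i < M ^ n}"
    using cellq by (auto simp: image_iff)
  finally show ?thesis unfolding fp_K_def UU_def by simp
qed

lemma ind_ev:
  assumes "i < M ^ n"
  shows "ind {i. i < M ^ n \<and> fp_kept \<omega> (digs M n i)} i = ev (PP M n i) \<omega>"
  using assms by (simp add: ind_def ev_def PP_def kept_pref)

lemma V0_formula:
  assumes M: "M > 0"
  shows "V0 (fp_K M \<omega> n) = (\<Sum>i<M ^ n. ev (PP M n i) \<omega> - (if i = 0 then 0 else ev (PP M n (i - 1) \<union> PP M n i) \<omega>))"
proof -
  let ?A = "{i. i < M ^ n \<and> fp_kept \<omega> (digs M n i)}"
  have h: "1 / real M ^ n > 0" using M by simp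
  have "V0 (fp_K M \<omega> n) = (\<Sum>i<M ^ n. ind ?A i - (if i = 0 then 0 else ind ?A (i - 1) * ind ?A i))"
    using comp_count[OF h, of ?A "M ^ n"] by (simp add: V0_def fpK_UU[OF M])
  also have "\<dots> = (\<Sum>i<M ^ n. ev (PP M n i) \<omega> - (if i = 0 then 0 else ev (PP M n (i - 1) \<union> PP M n i) \<omega>))"
  proof (rule sum.cong)
    fix i assume i: "i \<in> {..<M ^ n}"
    then have i': "i < M ^ n" "i - 1 < M ^ n" by auto
    show "ind ?A i - (if i = 0 then 0 else ind ?A (i - 1) * ind ?A i) =
          ev (PP M n i) \<omega> - (if i = 0 then 0 else ev (PP M n (i - 1) \<union> PP M n i) \<omega>)"
      using ind_ev[OF i'(1), of \<omega>] ind_ev[OF i'(2), of \<omega>] by (auto simp: ev_def)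
  qed simp
  finally show ?thesis .
qed

lemma V1_formula:
  assumes M: "M > 0"
  shows "V1 (fp_K M \<omega> n) = 1 / real M ^ n * (\<Sum>i<M ^ n. ev (PP M n i) \<omega>)"
proof -
  let ?A = "{i. i < M ^ n \<and> fp_kept \<omega> (digs M n i)}"
  have h: "1 / real M ^ n > 0" using M by simp
  have "V1 (fp_K M \<omega> n) = 1 / real M ^ n * (\<Sum>i<M ^ n. ind ?A i)"
    using len_count[OF h, of ?A "M ^ n"] by (simp add: V1_def fpK_UU[OF M])
  also have "(\<Sum>i<M ^ n. ind ?A i) = (\<Sum>i<M ^ n. ev (PP M n i) \<omega>)"
    by (rule sum.cong) (auto simp: ind_ev)
  finally show ?thesis .
qed

lemma EV1:
  assumes M: "M > 0" and p: "0 \<le> p" "p \<le> 1"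
  shows "(\<integral>\<omega>. V1 (fp_K M \<omega> n) \<partial>fp_space p) = p ^ n"
proof -
  have fin: "finite (PP M n i)" for i by (simp add: PP_def finite_pref)
  have "(\<integral>\<omega>. V1 (fp_K M \<omega> n) \<partial>fp_space p) = (\<integral>\<omega>. 1 / real M ^ n * (\<Sum>i<M ^ n. ev (PP M n i) \<omega>) \<partial>fp_space p)"
    by (simp add: V1_formula[OF M])
  also have "\<dots> = 1 / real M ^ n * (\<Sum>i<M ^ n. (\<integral>\<omega>. ev (PP M n i) \<omega> \<partial>fp_space p))"
    by (simp add: Bochner_Integration.integral_sum ev_integrable fin)
  also have "\<dots> = 1 / real M ^ n * (\<Sum>i<M ^ n. p ^ n)"
    by (simp add: ev_integral[OF fin p] card_PP)
  also have "\<dots> = p ^ n" using M by simp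
  finally show ?thesis .
qed

lemma EV0:
  assumes M: "M > 0" and p: "0 \<le> p" "p \<le> 1"
  shows "(\<integral>\<omega>. V0 (fp_K M \<omega> n) \<partial>fp_space p) = real M ^ n * p ^ n - G M p n"
proof -
  have fin: "finite (PP M n i)" for i by (simp add: PP_def finite_pref)
  have fin2: "finite (PP M n i \<union> PP M n j)" for i j by (simp add: fin)
  let ?g = "\<lambda>i \<omega>. ev (PP M n i) \<omega> - (if i = 0 then 0 else ev (PP M n (i - 1) \<union> PP M n i) \<omega>)"
  have gi: "integrable (fp_space p) (?g i) \<and>
      (\<integral>\<omega>. ?g i \<omega> \<partial>fp_space p) = p ^ n - (if i = 0 then 0 else p ^ card (PP M n (i - 1) \<union> PP M n i))" for i
  proof (cases "i = 0")
    case True then show ?thesis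
      by (simp add: ev_integrable fin ev_integral[OF fin p] card_PP)
  next
    case False then show ?thesis
      by (simp add: ev_integrable fin fin2 ev_integral[OF fin p] ev_integral[OF fin2 p] card_PP)
  qed
  have "(\<integral>\<omega>. V0 (fp_K M \<omega> n) \<partial>fp_space p) = (\<integral>\<omega>. (\<Sum>i<M ^ n. ?g i \<omega>) \<partial>fp_space p)"
    by (simp add: V0_formula[OF M])
  also have "\<dots> = (\<Sum>i<M ^ n. (\<integral>\<omega>. ?g i \<omega> \<partial>fp_space p))"
    by (rule Bochner_Integration.integral_sum) (use gi in blast)
  also have "\<dots> = (\<Sum>i<M ^ n. p ^ n - (if i = 0 then 0 else p ^ card (PP M n (i - 1) \<union> PP M n i)))"
    using gi by simp
  also have "\<dots> = real M ^ n * p ^ n - G M p n"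
    by (simp add: sum_subtractf G_def)
  finally show ?thesis .
qed

theorem corollary4p3:
  fixes M :: nat and p :: real
  assumes "M \<ge> 2" and "0 < p" and "p \<le> 1"
  defines "D \<equiv> ln (real M * p) / ln (real M)"
  defines "r \<equiv> 1 / real M"
  shows "((\<lambda>n. r powr (real n * (D - 1)) *
            (\<integral>\<omega>. V1 (fp_K M \<omega> n) \<partial>fp_space p)) \<longlonglongrightarrow> 1) \<and>
         ((\<lambda>n. r powr (real n * (D - 0)) *
            (\<integral>\<omega>. V0 (fp_K M \<omega> n) \<partial>fp_space p))
           \<longlonglongrightarrow> real M * (1 - p) / (real M - p))"
proof -
  have M0: "M > 0" using assms by simp
  have Mr: "real M \<ge> 2" using assms by simp
  have lnM: "ln (real M) > 0" using Mr by simp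
  have p0: "0 \<le> p" using assms by simp
  have lnr: "ln r = - ln (real M)" unfolding r_def using Mr by (simp add: ln_div)
  have lnMp: "ln (real M * p) = ln (real M) + ln p" using Mr assms by (simp add: ln_mult)
  have rpos: "r > 0" unfolding r_def using Mr by simp
  have r1: "r powr (real n * (D - 1)) = (1 / p) ^ n" for n
  proof -
    have "real n * (D - 1) * ln r = real n * ln (1 / p)"
      using lnM assms unfolding D_def lnr lnMp by (simp add: field_simps ln_div)
    then have "r powr (real n * (D - 1)) = (1 / p) powr real n"
      using rpos assms by (simp add: powr_def)
    then show ?thesis using assms by (simp add: powr_realpow)
  qed
  have r0: "r powr (real n * (D - 0)) = (1 / (real M * p)) ^ n" for n
  proof -
    have "real n * (D - 0) * ln r = real n * ln (1 / (real M * p))"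
      using lnM assms Mr unfolding D_def lnr by (simp add: field_simps ln_div)
    then have "r powr (real n * (D - 0)) = (1 / (real M * p)) powr real n"
      using rpos assms Mr by (simp add: powr_def)
    then show ?thesis using assms Mr by (simp add: powr_realpow)
  qed
  have part1: "(\<lambda>n. r powr (real n * (D - 1)) * (\<integral>\<omega>. V1 (fp_K M \<omega> n) \<partial>fp_space p)) = (\<lambda>n. 1)"
  proof
    fix n
    have "r powr (real n * (D - 1)) * (\<integral>\<omega>. V1 (fp_K M \<omega> n) \<partial>fp_space p) = (1 / p) ^ n * p ^ n"
      by (simp only: r1 EV1[OF M0 p0 assms(3)])
    also have "\<dots> = 1" using \<open>0 < p\<close> by (simp add: power_one_over field_simps)
    finally show "r powr (real n * (D - 1)) * (\<integral>\<omega>. V1 (fp_K M \<omega> n) \<partial>fp_space p) = 1" .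
  qed
  define q where "q = p / real M"
  have q: "norm q < 1" using assms Mr unfolding q_def by (simp add: abs_if field_simps)
  have part2: "(\<lambda>n. r powr (real n * (D - 0)) * (\<integral>\<omega>. V0 (fp_K M \<omega> n) \<partial>fp_space p))
      = (\<lambda>n. 1 - (real M - 1) * (q * (\<Sum>j<n. q ^ j)))"
  proof
    fix n
    have "(1 / (real M * p)) ^ n * (real M ^ n * p ^ n - (real M * p) ^ n * (real M - 1) * (\<Sum>j<n. q ^ Suc j))
        = 1 - (real M - 1) * (\<Sum>j<n. q ^ Suc j)"
      using assms Mr by (simp add: power_mult_distrib field_simps)
    moreover have "r powr (real n * (D - 0)) * (\<integral>\<omega>. V0 (fp_K M \<omega> n) \<partial>fp_space p)
      = (1 / (real M * p)) ^ n * (real M ^ n * p ^ n - (real M * p) ^ n * (real M - 1) * (\<Sum>j<n. q ^ Suc j))"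
      by (simp only: r0 EV0[OF M0 p0 assms(3)] G_closed[OF M0] q_def[symmetric])
    moreover have "(\<Sum>j<n. q ^ Suc j) = q * (\<Sum>j<n. q ^ j)"
      by (simp add: sum_distrib_left)
    ultimately show "r powr (real n * (D - 0)) * (\<integral>\<omega>. V0 (fp_K M \<omega> n) \<partial>fp_space p)
        = 1 - (real M - 1) * (q * (\<Sum>j<n. q ^ j))"
      by simp
  qed
  have lim: "(\<lambda>n. \<Sum>j<n. q ^ j) \<longlonglongrightarrow> 1 / (1 - q)"
    using geometric_sums[OF q] by (simp add: sums_def)
  have "(\<lambda>n. 1 - (real M - 1) * (q * (\<Sum>j<n. q ^ j))) \<longlonglongrightarrow> 1 - (real M - 1) * (q * (1 / (1 - q)))"
    by (intro tendsto_intros lim)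
  moreover have "1 - (real M - 1) * (q * (1 / (1 - q))) = real M * (1 - p) / (real M - p)"
    using Mr assms unfolding q_def by (simp add: field_simps)
  ultimately show ?thesis using part1 part2 by simp
qed

end
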